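(* Let $g\in\mathcal{G}_0$ and let $k>1$ be an integer. Then $$\limsup_{x\to0^+}\frac{g(x)}{\eta(x)}=\limsup_{n\to\infty}\frac{g(k^{-n})}{\eta(k^{-n})}\quad\text{and}\quad\liminf_{x\to0^+}\frac{g(x)}{\eta(x)}=\liminf_{n\to\infty}\frac{g(k^{-n})}{\eta(k^{-n})}.$$
   Context: $\mathcal{G}_0$ is the set of concave functions $g:[0,1]\to\mathbb{R}$ with $g(0)=\lim_{x\to0^+}g(x)=0$. Let $\eta(x)=-x\log x$ for $x>0$ and $\eta(0)=0$. *)

theory Defs
  imports "HOL-Analysis.Analysis"
begin

definition G0 :: "(real \<Rightarrow> real) set" where
  "G0 = {g. concave_on {0..1} g \<and> g 0 = 0 \<and> (g \<longlongrightarrow> 0) (at_right 0)}"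

definition eta :: "real \<Rightarrow> real" where
  "eta x = (if x > 0 then - x * ln x else 0)"

end

theory Submission imports Defs "HOL-Real_Asymp.Real_Asymp" begin

lemma Limsup_compose_le:
  fixes f :: "'a \<Rightarrow> ereal"
  assumes "filterlim m G F"
  shows "Limsup F (\<lambda>x. f (m x)) \<le> Limsup G f"
  unfolding Limsup_le_iff
proof (intro allI impI)
  fix y assume "Limsup G f < y"
  then have "eventually (\<lambda>x. f x < y) G" by (rule Limsup_lessD)
  then show "eventually (\<lambda>x. f (m x) < y) F"
    using assms unfolding filterlim_iff by blast
qed

lemma Liminf_compose_ge:
  fixes f :: "'a \<Rightarrow> ereal"
  assumes "filterlim m G F"
  shows "Liminf G f \<le> Liminf F (\<lambda>x. f (m x))"
  unfolding le_Liminf_iff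
proof (intro allI impI)
  fix y assume "y < Liminf G f"
  then have "eventually (\<lambda>x. f x > y) G" by (rule less_LiminfD)
  then show "eventually (\<lambda>x. f (m x) > y) F"
    using assms unfolding filterlim_iff by blast
qed

lemma G0_mono:
  assumes "g \<in> G0" "0 < x" "x \<le> y" "y \<le> 1"
  shows "g y / y \<le> g x / x"
proof -
  have c: "concave_on {0..1} g" and g0: "g 0 = 0" using assms(1) by (auto simp: G0_def)
  have "(1 - x/y) * g 0 + (x/y) * g y \<le> g ((1 - x/y) *\<^sub>R 0 + (x/y) *\<^sub>R y)"
    by (rule concave_onD[OF c]) (use assms in auto)
  then have "(x/y) * g y \<le> g x" using assms g0 by simp
  then show ?thesis using assms by (simp add: field_simps)
qed

lemma a_pos_tendsto:
  fixes k :: nat assumes "k > 1"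
  shows "filterlim (\<lambda>n. 1 / real k ^ n) (at_right 0) sequentially"
proof -
  have "(\<lambda>n. (1 / real k) ^ n) \<longlonglongrightarrow> 0"
    by (rule LIMSEQ_realpow_zero) (use assms in auto)
  then have "(\<lambda>n. 1 / real k ^ n) \<longlonglongrightarrow> 0" by (simp add: power_one_over)
  moreover have "eventually (\<lambda>n. 1 / real k ^ n > 0) sequentially" using assms by simp
  ultimately show ?thesis by (rule tendsto_imp_filterlim_at_right)
qed

theorem mainTheorem9:
  fixes g :: "real \<Rightarrow> real" and k :: nat
  assumes "g \<in> G0" and "k > 1"
  shows "Limsup (at_right 0) (\<lambda>x. ereal (g x / eta x)) =
           limsup (\<lambda>n. ereal (g (1 / real k ^ n) / eta (1 / real k ^ n)))
       \<and> Liminf (at_right 0) (\<lambda>x. ereal (g x / eta x)) =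
           liminf (\<lambda>n. ereal (g (1 / real k ^ n) / eta (1 / real k ^ n)))"
proof -
  define a where "a n = 1 / real k ^ n" for n
  define h where "h x = g x / x" for x
  define r where "r x = g x / eta x" for x
  define R where "R x = ereal (r x)" for x
  define s where "s n = r (a n)" for n
  define S where "S n = ereal (s n)" for n
  have gk: "real k > 1" using assms(2) by simp
  have lk: "ln (real k) > 0" using gk by simp
  have apos: "a n > 0" for n using gk by (simp add: a_def)
  have ale1: "a n \<le> 1" for n using gk by (simp add: a_def)
  have amono: "a n \<le> a m" if "m \<le> n" for m n
    using that gk by (simp add: a_def field_simps power_increasing)
  have lna: "ln (a n) = - (real n * ln k)" for n
    using gk by (simp add: a_def ln_div ln_realpow)
  have s_eq: "s n = h (a n) / (real n * ln k)" for n
    using apos[of n] lna[of n] by (simp add: s_def r_def h_def eta_def)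
  have r_eq: "r x = h x / (- ln x)" if "x > 0" for x
    using that by (simp add: r_def h_def eta_def)
  have hmono: "h y \<le> h x" if "0 < x" "x \<le> y" "y \<le> 1" for x y
    unfolding h_def by (rule G0_mono[OF assms(1) that])
  have bracket: "\<exists>m. a (Suc m) < x \<and> x \<le> a m" if "0 < x" "x \<le> 1" for x
  proof -
    have "\<exists>n. \<not> (1/x < real k ^ n) \<and> 1/x < real k ^ Suc n"
    proof (rule exists_least_lemma)
      show "\<not> 1 / x < real k ^ 0" using that by simp
      show "\<exists>n. 1 / x < real k ^ n" using real_arch_pow[OF gk] by blast
    qed
    then obtain m where "real k ^ m \<le> 1/x" "1/x < real k ^ Suc m" by (auto simp: not_less simp del: power_Suc)
    then have "a (Suc m) < x \<and> x \<le> a m" using that gk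
      by (simp add: a_def field_simps del: power_Suc)
    then show ?thesis by blast
  qed
  have lnb: "real m * ln k \<le> - ln x \<and> - ln x \<le> real (Suc m) * ln k"
    if "a (Suc m) < x" "x \<le> a m" for x m
  proof -
    have "x > 0" using that apos[of "Suc m"] by simp
    then have "ln x \<le> ln (a m)" "ln (a (Suc m)) \<le> ln x" using that apos by auto
    then show ?thesis using lna[of m] lna[of "Suc m"] by linarith
  qed
  have Sa: "S = (\<lambda>n. R (a n))" by (simp add: S_def R_def s_def fun_eq_iff)
  have afilt: "filterlim a (at_right 0) sequentially"
    unfolding a_def by (rule a_pos_tendsto[OF assms(2)])
  have up1: "limsup S \<le> Limsup (at_right 0) R"
    unfolding Sa by (rule Limsup_compose_le[OF afilt])
  have lo1: "Liminf (at_right 0) R \<le> liminf S"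
    unfolding Sa by (rule Liminf_compose_ge[OF afilt])
  have main: "Limsup (at_right 0) R = limsup S \<and> Liminf (at_right 0) R = liminf S"
  proof (cases "\<exists>M. \<forall>x\<in>{0<..1}. h x \<le> M")
    case True
    then obtain M where M: "\<And>x. 0 < x \<Longrightarrow> x \<le> 1 \<Longrightarrow> h x \<le> M" by fastforce
    define C where "C = max \<bar>M\<bar> \<bar>h 1\<bar>"
    have hC: "\<bar>h x\<bar> \<le> C" if "0 < x" "x \<le> 1" for x
      using M[OF that] hmono[OF that order_refl] unfolding C_def by linarith
    have lim1: "((\<lambda>x. 1 / (- ln x)) \<longlongrightarrow> 0) (at_right (0::real))" by real_asymp
    have lim2: "((\<lambda>x. C * (1 / (- ln x))) \<longlongrightarrow> 0) (at_right (0::real))"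
      using tendsto_mult_right_zero[OF lim1] by simp
    have ev: "eventually (\<lambda>x. norm (r x) \<le> C * (1 / (- ln x))) (at_right (0::real))"
      unfolding eventually_at_right_field
    proof (intro exI[of _ 1] conjI allI impI)
      fix x :: real assume x: "0 < x" "x < 1"
      then have L: "- ln x > 0" by simp
      have "norm (r x) = \<bar>h x\<bar> / (- ln x)" using r_eq[OF x(1)] L by (simp add: abs_div)
      also have "\<dots> \<le> C / (- ln x)" using hC[of x] x L by (intro divide_right_mono) auto
      finally show "norm (r x) \<le> C * (1 / (- ln x))" by simp
    qed simp
    have rlim: "(r \<longlongrightarrow> 0) (at_right 0)" by (rule Lim_null_comparison[OF ev lim2])
    then have Rlim: "(R \<longlongrightarrow> 0) (at_right 0)" unfolding R_def zero_ereal_def lim_ereal .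
    have Slim: "(S \<longlongrightarrow> 0) sequentially"
      unfolding Sa by (rule filterlim_compose[OF Rlim afilt])
    show ?thesis
      using lim_imp_Limsup[OF _ Rlim] lim_imp_Liminf[OF _ Rlim]
        lim_imp_Limsup[OF _ Slim] lim_imp_Liminf[OF _ Slim] by simp
  next
    case False
    then obtain x0 where x0: "0 < x0" "x0 \<le> 1" "h x0 > 0" by (metis (no_types, lifting) greaterThanAtMost_iff not_le)
    obtain n0 where "1 / x0 < real k ^ n0" using real_arch_pow[OF gk] by blast
    then have "a n0 < x0" using x0 gk by (simp add: a_def field_simps)
    define N0 where "N0 = Suc n0"
    have N0: "a N0 \<le> x0" "N0 \<ge> 1" using amono[of n0 "Suc n0"] \<open>a n0 < x0\<close> by (auto simp: N0_def)
    have hpos: "h x > 0" if "0 < x" "x \<le> a N0" for x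
      using hmono[of x x0] that N0 x0 by auto
    define u where "u n = real (Suc n) / real n * s (Suc n)" for n
    define v where "v n = real n / real (Suc n) * s n" for n
    have bnd: "v m \<le> r x \<and> r x \<le> u m" if "m \<ge> N0" "a (Suc m) < x" "x \<le> a m" for m x
    proof -
      have x: "x > 0" using that apos[of "Suc m"] by simp
      have m1: "m \<ge> 1" using that N0 by simp
      have L: "real m * ln k \<le> - ln x" "- ln x \<le> real (Suc m) * ln k" using lnb[OF that(2,3)] by auto
      have mk: "real m * ln k > 0" using m1 lk by simp
      have lx: "ln x < 0" using L mk by linarith
      have h1: "h (a m) \<le> h x" using hmono[OF x that(3) ale1] .
      have h2: "h x \<le> h (a (Suc m))" using that apos[of "Suc m"] ale1[of m] by (intro hmono) auto
      have hp: "h (a m) > 0" using hpos[OF apos] amono[OF that(1)] by simp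
      have ueq: "u m = h (a (Suc m)) / (real m * ln k)"
        unfolding u_def s_eq using m1 lk by (simp add: divide_simps del: of_nat_Suc)
      have veq: "v m = h (a m) / (real (Suc m) * ln k)"
        unfolding v_def s_eq using m1 lk by (simp add: divide_simps del: of_nat_Suc)
      have "r x = h x / (- ln x)" using r_eq[OF x] .
      have "h x / (- ln x) \<le> h (a (Suc m)) / (- ln x)"
        using h2 L mk by (intro divide_right_mono) auto
      also have "\<dots> \<le> h (a (Suc m)) / (real m * ln k)"
        using h1 h2 hp L mk lx by (intro divide_left_mono) (auto intro: mult_neg_pos)
      finally have A: "r x \<le> u m" using r_eq[OF x] ueq by simp
      have "h (a m) / (real (Suc m) * ln k) \<le> h (a m) / (- ln x)"
        using hp L mk lx lk by (intro divide_left_mono) (auto intro!: mult_pos_neg)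
      also have "\<dots> \<le> h x / (- ln x)"
        using h1 L mk by (intro divide_right_mono) auto
      finally have B: "v m \<le> r x" using r_eq[OF x] veq by simp
      show ?thesis using A B by simp
    qed
    have c1: "(\<lambda>n. ereal (real (Suc n) / real n)) \<longlonglongrightarrow> 1"
      unfolding one_ereal_def lim_ereal by (rule LIMSEQ_Suc_n_over_n)
    have c2: "(\<lambda>n. ereal (real n / real (Suc n))) \<longlonglongrightarrow> 1"
      unfolding one_ereal_def lim_ereal by (rule LIMSEQ_n_over_Suc_n)
    have ulim: "limsup (\<lambda>n. ereal (u n)) = limsup S"
    proof -
      have "limsup (\<lambda>n. ereal (u n)) = limsup (\<lambda>n. ereal (real (Suc n) / real n) * S (Suc n))"
        by (simp add: u_def S_def)
      also have "\<dots> = 1 * limsup (\<lambda>n. S (Suc n))"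
        by (rule ereal_limsup_lim_mult[OF c1]) auto
      also have "\<dots> = limsup S" using limsup_shift[of S] by simp
      finally show ?thesis .
    qed
    have vlim: "liminf (\<lambda>n. ereal (v n)) = liminf S"
    proof -
      have "liminf (\<lambda>n. ereal (v n)) = liminf (\<lambda>n. ereal (real n / real (Suc n)) * S n)"
        by (simp add: v_def S_def)
      also have "\<dots> = 1 * liminf S"
        by (rule ereal_liminf_lim_mult[OF c2]) auto
      finally show ?thesis by simp
    qed
    have key: "\<exists>b>0. \<forall>x>0. x < b \<longrightarrow> P (r x)"
      if ev: "eventually (\<lambda>n. Q (u n) (v n)) sequentially"
         and imp: "\<And>m x. Q (u m) (v m) \<Longrightarrow> v m \<le> r x \<Longrightarrow> r x \<le> u m \<Longrightarrow> P (r x)" for P Q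
    proof -
      obtain N where N: "\<And>n. n \<ge> N \<Longrightarrow> Q (u n) (v n)"
        using ev unfolding eventually_sequentially by blast
      define N' where "N' = max N N0"
      show ?thesis
      proof (intro exI[of _ "a N'"] conjI allI impI)
        show "a N' > 0" by (rule apos)
        fix x :: real assume x: "0 < x" "x < a N'"
        then obtain m where m: "a (Suc m) < x" "x \<le> a m" using bracket[of x] ale1[of N'] by auto
        have "m \<ge> N'"
        proof (rule ccontr)
          assume "\<not> N' \<le> m"
          then have "a N' \<le> a (Suc m)" using amono by simp
          then show False using x m by simp
        qed
        then have mN: "m \<ge> N" "m \<ge> N0" by (auto simp: N'_def)
        have b: "v m \<le> r x" "r x \<le> u m" using bnd[OF mN(2) m] by auto
        show "P (r x)" by (rule imp[OF N[OF mN(1)] b])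
      qed
    qed
    have up2: "Limsup (at_right 0) R \<le> limsup S"
      unfolding Limsup_le_iff
    proof (intro allI impI)
      fix y assume "limsup S < y"
      then have "eventually (\<lambda>n. ereal (u n) < y) sequentially"
        using Limsup_lessD ulim by metis
      then have "\<exists>b>0. \<forall>x>0. x < b \<longrightarrow> ereal (r x) < y"
        by (rule key[where Q="\<lambda>p q. ereal p < y"]) (metis ereal_less_eq(3) le_less_trans)
      then show "eventually (\<lambda>x. R x < y) (at_right 0)"
        unfolding eventually_at_right_field R_def by simp
    qed
    have lo2: "liminf S \<le> Liminf (at_right 0) R"
      unfolding le_Liminf_iff
    proof (intro allI impI)
      fix y assume "y < liminf S"
      then have "eventually (\<lambda>n. ereal (v n) > y) sequentially"
        using less_LiminfD vlim by metis
      then have "\<exists>b>0. \<forall>x>0. x < b \<longrightarrow> ereal (r x) > y"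
        by (rule key[where Q="\<lambda>p q. ereal q > y"]) (metis ereal_less_eq(3) less_le_trans)
      then show "eventually (\<lambda>x. R x > y) (at_right 0)"
        unfolding eventually_at_right_field R_def by simp
    qed
    show ?thesis using up1 up2 lo1 lo2 by auto
  qed
  moreover have "R = (\<lambda>x. ereal (g x / eta x))" by (simp add: fun_eq_iff R_def r_def)
  moreover have "S = (\<lambda>n. ereal (g (1 / real k ^ n) / eta (1 / real k ^ n)))"
    by (simp add: fun_eq_iff S_def s_def r_def a_def)
  ultimately show ?thesis by simp
qed

end
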